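(* Assume Condition (T) (see context). Let $i\le d$ with $\alpha_i>\widetilde\alpha_i=\alpha_{j_0}$ for some $j_0$ with $i\vartriangleleft j_0$, and let $u_i=\lim_{s\to\infty}\mathbb E\,\pi_{ij_0}(s)^{\alpha_{j_0}}$ (this limit exists and lies in $(0,\infty)$). Then for every $j$ with $i\trianglelefteq j\vartriangleleft j_0$ there exists $\hat s_j$ such that $\mathbb E\,\pi_{ij}(s)^{\alpha_{j_0}}<u_i$ for all $s>\hat s_j$.
   Context: $(\mathbf A_t)_{t\in\mathbb Z}$ is an i.i.d. sequence of copies of a random $d\times d$ matrix $\mathbf A$, entries $A_{ij,t}$, jointly with random vectors $\mathbf B_t$ forming i.i.d. copies of $(\mathbf A,\mathbf B)$. Condition (T): (T-1) $\mathbf A\ge 0$, $\mathbf B\ge 0$ entrywise a.s.; (T-2) $\mathbb P(B_i=0)<1$; (T-3) $\mathbb P(A_{ij}=0)=1$ whenever $i>j$; (T-4) there exist $\alpha_1,\dots,\alpha_d>0$, pairwise distinct, with $\mathbb E A_{ii}^{\alpha_i}=1$; (T-5) $\mathbb E A_{ij}^{\alpha_i}<\infty$; (T-6) $\mathbb E B_i^{\alpha_i}<\infty$; (T-7) $\mathbb E[A_{ii}^{\alpha_i}\log^+A_{ii}]<\infty$; (T-8) the law of $\log A_{ii}$ given $\{A_{ii}>0\}$ is non-arithmetic. Relations: $i\preccurlyeq j$ if $\mathbb P(A_{ij}>0)>0$; $i\trianglelefteq j$ if there is a chain $i=i(0)\preccurlyeq\dots\preccurlyeq i(m)=j$ ($m\ge0$);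 $i\vartriangleleft j$ if $i\trianglelefteq j$, $i\ne j$; $\widetilde\alpha_i=\min\{\alpha_j:i\trianglelefteq j\}$. $\pi_{ij}(s)$ denotes the $(i,j)$ entry of $\mathbf A_0\mathbf A_{-1}\cdots\mathbf A_{-s+1}$. *)

theory Defs
  imports "HOL-Probability.Probability"
begin

text \<open>Random d x d matrices are functions nat => nat => real, indices in {1..d}.
  A t w i j is the (i,j) entry of A_t at outcome w; B t w i is the i-th entry of B_t.\<close>

definition MAB :: "nat \<Rightarrow> ((nat \<times> nat \<Rightarrow> real) \<times> (nat \<Rightarrow> real)) measure" where
  "MAB d = PiM ({1..d} \<times> {1..d}) (\<lambda>_. borel) \<Otimes>\<^sub>M PiM {1..d} (\<lambda>_. borel)"

definition obsAB ::
  "nat \<Rightarrow> (int \<Rightarrow> 'a \<Rightarrow> nat \<Rightarrow> nat \<Rightarrow> real) \<Rightarrow> (int \<Rightarrow> 'a \<Rightarrow> nat \<Rightarrow> real) \<Rightarrow> int \<Rightarrow> 'a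
     \<Rightarrow> (nat \<times> nat \<Rightarrow> real) \<times> (nat \<Rightarrow> real)" where
  "obsAB d A B t w = ((\<lambda>(i,j)\<in>{1..d} \<times> {1..d}. A t w i j), (\<lambda>i\<in>{1..d}. B t w i))"

text \<open>(A_t, B_t), t in Z, are i.i.d. copies of (A, B) = (A_0, B_0).\<close>
definition iid_AB :: "'a measure \<Rightarrow> nat \<Rightarrow> (int \<Rightarrow> 'a \<Rightarrow> nat \<Rightarrow> nat \<Rightarrow> real)
     \<Rightarrow> (int \<Rightarrow> 'a \<Rightarrow> nat \<Rightarrow> real) \<Rightarrow> bool" where
  "iid_AB M d A B \<longleftrightarrow>
     prob_space.indep_vars M (\<lambda>_. MAB d) (obsAB d A B) (UNIV :: int set) \<and>
     (\<forall>t. distr M (MAB d) (obsAB d A B t) = distr M (MAB d) (obsAB d A B 0))"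

text \<open>The law of a real random variable X conditioned on an event E is arithmetic if it is
  concentrated on c*Z for some c > 0; non-arithmetic otherwise.\<close>
definition non_arithmetic_given :: "'a measure \<Rightarrow> ('a \<Rightarrow> real) \<Rightarrow> ('a \<Rightarrow> bool) \<Rightarrow> bool" where
  "non_arithmetic_given M X E \<longleftrightarrow>
     (\<forall>c>0. measure M {w \<in> space M. E w \<and> (\<exists>k::int. X w = c * of_int k)}
              < measure M {w \<in> space M. E w})"

definition condition_T :: "'a measure \<Rightarrow> nat \<Rightarrow> (int \<Rightarrow> 'a \<Rightarrow> nat \<Rightarrow> nat \<Rightarrow> real)
     \<Rightarrow> (int \<Rightarrow> 'a \<Rightarrow> nat \<Rightarrow> real) \<Rightarrow> (nat \<Rightarrow> real) \<Rightarrow> bool" where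
  "condition_T M d A B \<alpha> \<longleftrightarrow>
     \<comment> \<open>(T-1)\<close>
     (AE w in M. (\<forall>i\<in>{1..d}. \<forall>j\<in>{1..d}. A 0 w i j \<ge> 0) \<and> (\<forall>i\<in>{1..d}. B 0 w i \<ge> 0)) \<and>
     \<comment> \<open>(T-2)\<close>
     (\<forall>i\<in>{1..d}. measure M {w \<in> space M. B 0 w i = 0} < 1) \<and>
     \<comment> \<open>(T-3)\<close>
     (\<forall>i\<in>{1..d}. \<forall>j\<in>{1..d}. i > j \<longrightarrow> measure M {w \<in> space M. A 0 w i j = 0} = 1) \<and>
     \<comment> \<open>(T-4)\<close>
     (\<forall>i\<in>{1..d}. \<alpha> i > 0) \<and> inj_on \<alpha> {1..d} \<and>
     (\<forall>i\<in>{1..d}. integrable M (\<lambda>w. A 0 w i i powr \<alpha> i) \<and>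
                  integral\<^sup>L M (\<lambda>w. A 0 w i i powr \<alpha> i) = 1) \<and>
     \<comment> \<open>(T-5)\<close>
     (\<forall>i\<in>{1..d}. \<forall>j\<in>{1..d}. integrable M (\<lambda>w. A 0 w i j powr \<alpha> i)) \<and>
     \<comment> \<open>(T-6)\<close>
     (\<forall>i\<in>{1..d}. integrable M (\<lambda>w. B 0 w i powr \<alpha> i)) \<and>
     \<comment> \<open>(T-7)\<close>
     (\<forall>i\<in>{1..d}. integrable M (\<lambda>w. A 0 w i i powr \<alpha> i * max 0 (ln (A 0 w i i)))) \<and>
     \<comment> \<open>(T-8)\<close>
     (\<forall>i\<in>{1..d}. non_arithmetic_given M (\<lambda>w. ln (A 0 w i i)) (\<lambda>w. A 0 w i i > 0))"

definition prec :: "'a measure \<Rightarrow> nat \<Rightarrow> (int \<Rightarrow> 'a \<Rightarrow> nat \<Rightarrow> nat \<Rightarrow> real) \<Rightarrow> nat \<Rightarrow> nat \<Rightarrow> bool" where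
  "prec M d A i j \<longleftrightarrow> i \<in> {1..d} \<and> j \<in> {1..d} \<and> measure M {w \<in> space M. A 0 w i j > 0} > 0"

definition trle :: "'a measure \<Rightarrow> nat \<Rightarrow> (int \<Rightarrow> 'a \<Rightarrow> nat \<Rightarrow> nat \<Rightarrow> real) \<Rightarrow> nat \<Rightarrow> nat \<Rightarrow> bool" where
  "trle M d A i j \<longleftrightarrow> (prec M d A)\<^sup>*\<^sup>* i j"

definition trlt :: "'a measure \<Rightarrow> nat \<Rightarrow> (int \<Rightarrow> 'a \<Rightarrow> nat \<Rightarrow> nat \<Rightarrow> real) \<Rightarrow> nat \<Rightarrow> nat \<Rightarrow> bool" where
  "trlt M d A i j \<longleftrightarrow> trle M d A i j \<and> i \<noteq> j"

definition alpha_tilde :: "'a measure \<Rightarrow> nat \<Rightarrow> (int \<Rightarrow> 'a \<Rightarrow> nat \<Rightarrow> nat \<Rightarrow> real)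
     \<Rightarrow> (nat \<Rightarrow> real) \<Rightarrow> nat \<Rightarrow> real" where
  "alpha_tilde M d A \<alpha> i = Min (\<alpha> ` {j \<in> {1..d}. trle M d A i j})"

text \<open>piM d A s w = A_0 A_{-1} ... A_{-s+1} (identity for s = 0), d x d matrix product.\<close>
fun piM :: "nat \<Rightarrow> (int \<Rightarrow> 'a \<Rightarrow> nat \<Rightarrow> nat \<Rightarrow> real) \<Rightarrow> nat \<Rightarrow> 'a \<Rightarrow> nat \<Rightarrow> nat \<Rightarrow> real" where
  "piM d A 0 w = (\<lambda>i j. if i = j then 1 else 0)"
| "piM d A (Suc s) w = (\<lambda>i j. \<Sum>k\<in>{1..d}. piM d A s w i k * A (- int s) w k j)"

end

theory Submission
  imports Defs
begin


lemma subadd_powr: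
  fixes x y a :: real
  assumes "0 \<le> x" "0 \<le> y" "0 < a" "a \<le> 1"
  shows "(x + y) powr a \<le> x powr a + y powr a"
proof (cases "x + y = 0")
  case True then show ?thesis using assms by auto
next
  case False
  hence s: "x + y > 0" using assms by auto
  have t1: "x / (x+y) \<le> (x / (x+y)) powr a"
  proof -
    have "x/(x+y) \<le> 1" "0 \<le> x/(x+y)" using assms s by auto
    thus ?thesis using assms by (metis powr_mono' powr_one)
  qed
  have t2: "y / (x+y) \<le> (y / (x+y)) powr a"
  proof -
    have "y/(x+y) \<le> 1" "0 \<le> y/(x+y)" using assms s by auto
    thus ?thesis using assms by (metis powr_mono' powr_one)
  qed
  have "x/(x+y) + y/(x+y) = 1" using s by (simp add: add_divide_distrib[symmetric])
  hence "1 \<le> (x / (x+y)) powr a + (y / (x+y)) powr a"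
    using t1 t2 by linarith
  also have "\<dots> = (x powr a + y powr a) / (x+y) powr a"
    using assms s by (simp add: powr_divide add_divide_distrib)
  finally show ?thesis using s by (simp add: divide_simps)
qed

lemma convex_powr_ineq:
  fixes u v a l :: real
  assumes "1 \<le> a" "0 \<le> u" "0 \<le> v" "0 < l" "l < 1"
  shows "(u + v) powr a \<le> l powr (1-a) * u powr a + (1-l) powr (1-a) * v powr a"
proof -
  have c1: "1 \<le> l powr (1-a)" using assms by (smt (verit) powr01_less_one)
  have c2: "1 \<le> (1-l) powr (1-a)" using assms by (smt (verit) powr01_less_one)
  show ?thesis
  proof (cases "u = 0 \<or> v = 0")
    case True
    then show ?thesis
    proof
      assume "u = 0"
      then show ?thesis using c2 assms by (simp add: mult_le_cancel_right1 powr_ge_zero)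
    next
      assume "v = 0"
      then show ?thesis using c1 assms by (simp add: mult_le_cancel_right1 powr_ge_zero)
    qed
  next
    case False
    hence uv: "u > 0" "v > 0" using assms by auto
    have cv: "convex_on {0<..} (\<lambda>x::real. x powr a)" by (rule powr_convex) (use assms in auto)
    have "(l * (u/l) + (1-l) * (v/(1-l))) powr a \<le> l * (u/l) powr a + (1-l) * (v/(1-l)) powr a"
      using convex_onD[OF cv, of "1-l" "u/l" "v/(1-l)"] uv assms by (simp add: algebra_simps)
    moreover have "l * (u/l) + (1-l) * (v/(1-l)) = u + v" using assms by auto
    moreover have "l * (u/l) powr a = l powr (1-a) * u powr a"
      using assms uv by (simp add: powr_divide powr_diff)
    moreover have "(1-l) * (v/(1-l)) powr a = (1-l) powr (1-a) * v powr a"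
      using assms uv by (simp add: powr_divide powr_diff)
    ultimately show ?thesis by simp
  qed
qed

lemma crude_powr_sum:
  fixes x :: "'b \<Rightarrow> real" and a :: real
  assumes "finite K" "\<And>k. k \<in> K \<Longrightarrow> 0 \<le> x k" "0 < a"
  shows "(\<Sum>k\<in>K. x k) powr a \<le> real (card K) powr a * (\<Sum>k\<in>K. x k powr a)"
proof (cases "K = {}")
  case True then show ?thesis by simp
next
  case False
  define m where "m = Max (x ` K)"
  have mK: "m \<in> x ` K" unfolding m_def using assms False by auto
  then obtain k0 where k0: "k0 \<in> K" "m = x k0" by auto
  have le: "\<And>k. k \<in> K \<Longrightarrow> x k \<le> m" unfolding m_def using assms by auto
  have "(\<Sum>k\<in>K. x k) \<le> (\<Sum>k\<in>K. m)" using le by (rule sum_mono)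
  hence s: "(\<Sum>k\<in>K. x k) \<le> real (card K) * m" by simp
  have "(\<Sum>k\<in>K. x k) powr a \<le> (real (card K) * m) powr a"
    using s assms by (intro powr_mono2) (auto intro: sum_nonneg)
  also have "\<dots> = real (card K) powr a * m powr a"
    using k0 assms by (simp add: powr_mult)
  also have "m powr a \<le> (\<Sum>k\<in>K. x k powr a)"
    using member_le_sum[of k0 K "\<lambda>k. x k powr a"] k0 assms by auto
  hence "real (card K) powr a * m powr a \<le> real (card K) powr a * (\<Sum>k\<in>K. x k powr a)"
    by (intro mult_left_mono) auto
  finally show ?thesis .
qed

lemma tangent_powr_strict:
  fixes y q :: real
  assumes "0 < q" "q < 1" "0 \<le> y" "y \<noteq> 1"
  shows "y powr q < q * y + (1 - q)"
proof -
  have der: "DERIV (\<lambda>z. z powr q) x :> q * x powr (q - 1)" if "0 < x" for x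
    using has_real_derivative_powr[OF that] .
  consider "y = 0" | "0 < y" "y < 1" | "1 < y" using assms by linarith
  then show ?thesis
  proof cases
    case 1 then show ?thesis using assms by simp
  next
    case 2
    obtain z where z: "y < z" "z < 1" "1 powr q - y powr q = (1 - y) * (q * z powr (q - 1))"
      using MVT2[of y 1 "\<lambda>z. z powr q" "\<lambda>x. q * x powr (q - 1)"] der 2 by force
    have "z powr (q - 1) > 1" using z 2 assms
      by (metis less_iff_diff_less_0 powr_less_mono2_neg powr_one_eq_one order.strict_trans)
    hence "(1 - y) * (q * z powr (q - 1)) > (1 - y) * q" using 2 assms
      by (simp add: mult_strict_left_mono)
    then show ?thesis using z by (simp add: algebra_simps)
  next
    case 3
    obtain z where z: "1 < z" "z < y" "y powr q - 1 powr q = (y - 1) * (q * z powr (q - 1))"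
      using MVT2[of 1 y "\<lambda>z. z powr q" "\<lambda>x. q * x powr (q - 1)"] der 3 by force
    have "z powr (q - 1) < 1" using z 3 assms
      by (simp add: powr_less_one)
    hence "(y - 1) * (q * z powr (q - 1)) < (y - 1) * q" using 3 assms
      by (simp add: mult_strict_left_mono)
    then show ?thesis using z by (simp add: algebra_simps)
  qed
qed
lemma tangent_powr:
  fixes y q :: real
  assumes "0 < q" "q < 1" "0 \<le> y"
  shows "y powr q \<le> q * y + (1 - q)"
  using tangent_powr_strict[OF assms] by (cases "y = 1") auto

lemma seq_geom_bound:
  fixes x :: "nat \<Rightarrow> real"
  assumes "\<And>s. x (Suc s) \<le> g * x s + D * q ^ s" "0 \<le> g" "g < 1" "0 \<le> q" "q < 1" "0 \<le> D"
  shows "\<exists>C r. 0 \<le> r \<and> r < 1 \<and> (\<forall>s. x s \<le> C * r ^ s)"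
proof -
  define m where "m = max g q"
  define r where "r = (1 + m) / 2"
  define C where "C = max (x 0) (D / (r - m))"
  have mr: "m < r" "0 \<le> m" "r < 1" "g \<le> m" "q \<le> m" using assms unfolding r_def m_def by auto
  have "0 \<le> D / (r - m)" using mr assms by auto
  hence C0: "0 \<le> C" unfolding C_def by linarith
  have "D / (r - m) \<le> C" unfolding C_def by simp
  hence CD: "D \<le> C * (r - m)" using mr by (simp add: pos_divide_le_eq)
  have "x s \<le> C * r ^ s" for s
  proof (induction s)
    case 0 then show ?case unfolding C_def by simp
  next
    case (Suc s)
    have "x (Suc s) \<le> g * x s + D * q ^ s" by (rule assms(1))
    also have "\<dots> \<le> m * (C * r ^ s) + D * r ^ s"
    proof (intro add_mono)
      show "g * x s \<le> m * (C * r ^ s)"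
      proof -
        have "g * x s \<le> g * (C * r ^ s)" using Suc assms(2) by (rule mult_left_mono)
        also have "\<dots> \<le> m * (C * r ^ s)" using mr C0 by (intro mult_right_mono) auto
        finally show ?thesis .
      qed
      show "D * q ^ s \<le> D * r ^ s"
        using mr assms by (intro mult_left_mono power_mono) auto
    qed
    also have "\<dots> \<le> C * r ^ Suc s"
    proof -
      have "m * (C * r ^ s) + D * r ^ s = (m * C + D) * r ^ s" by (simp add: algebra_simps)
      also have "\<dots> \<le> (r * C) * r ^ s" using CD mr by (intro mult_right_mono) (auto simp: algebra_simps)
      finally show ?thesis by (simp add: algebra_simps)
    qed
    finally show ?case .
  qed
  thus ?thesis using mr by (intro exI[of _ C] exI[of _ r]) auto
qed

lemma seq_bdd_bound:
  fixes x :: "nat \<Rightarrow> real"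
  assumes "\<And>s. x (Suc s) \<le> x s + D * q ^ s" "0 \<le> q" "q < 1" "0 \<le> D"
  shows "x s \<le> x 0 + D / (1 - q)"
proof -
  have "x s \<le> x 0 + D * (1 - q ^ s) / (1 - q)" for s
  proof (induction s)
    case 0 then show ?case by simp
  next
    case (Suc s)
    have "x (Suc s) \<le> x 0 + D * (1 - q ^ s) / (1 - q) + D * q ^ s" using Suc assms(1)[of s] by linarith
    also have "\<dots> = x 0 + D * (1 - q ^ Suc s) / (1 - q)" using assms by (simp add: field_simps)
    finally show ?case .
  qed
  moreover have "D * (1 - q ^ s) / (1 - q) \<le> D / (1 - q)"
    using assms by (intro divide_right_mono mult_left_le) auto
  ultimately show ?thesis by (meson add_left_mono order_trans)
qed

lemma finite_geom_bound:
  fixes x :: "'b \<Rightarrow> nat \<Rightarrow> real"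
  assumes "finite K" "\<And>k. k \<in> K \<Longrightarrow> \<exists>C r. 0 \<le> r \<and> r < 1 \<and> (\<forall>s. x k s \<le> C * r ^ s)"
  shows "\<exists>C r. 0 \<le> C \<and> 0 \<le> r \<and> r < 1 \<and> (\<forall>k\<in>K. \<forall>s. x k s \<le> C * r ^ s)"
  using assms
proof (induction K rule: finite_induct)
  case empty then show ?case by (intro exI[of _ 0]) auto
next
  case (insert k K)
  have "\<exists>C r. 0 \<le> C \<and> 0 \<le> r \<and> r < 1 \<and> (\<forall>k\<in>K. \<forall>s. x k s \<le> C * r ^ s)"
    by (rule insert.IH) (rule insert.prems, simp)
  then obtain C1 r1 where 1: "0 \<le> C1" "0 \<le> r1" "r1 < 1" "\<forall>k\<in>K. \<forall>s. x k s \<le> C1 * r1 ^ s"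
    by blast
  obtain C2 r2 where 2: "0 \<le> r2" "r2 < 1" "\<forall>s. x k s \<le> C2 * r2 ^ s"
    using insert.prems[of k] by blast
  define CC where "CC = max C1 (max C2 0)"
  define rr where "rr = max r1 r2"
  have "\<forall>k'\<in>insert k K. \<forall>s. x k' s \<le> CC * rr ^ s"
  proof (intro ballI allI)
    fix k' s assume "k' \<in> insert k K"
    then show "x k' s \<le> CC * rr ^ s"
    proof
      assume "k' = k"
      have "x k s \<le> C2 * r2 ^ s" using 2 by auto
      also have "\<dots> \<le> CC * rr ^ s" unfolding CC_def rr_def using 2
        by (intro mult_mono power_mono) auto
      finally show ?thesis using \<open>k' = k\<close> by simp
    next
      assume "k' \<in> K"
      hence "x k' s \<le> C1 * r1 ^ s" using 1 by auto
      also have "\<dots> \<le> CC * rr ^ s" unfolding CC_def rr_def using 1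
        by (intro mult_mono power_mono) auto
      finally show ?thesis .
    qed
  qed
  moreover have "0 \<le> CC" "0 \<le> rr" "rr < 1" using 1 2 unfolding CC_def rr_def by auto
  ultimately show ?case by blast
qed




lemma powr_add_bound2:
  fixes x y a :: real
  assumes "0 \<le> x" "0 \<le> y" "0 < a"
  shows "(x + y) powr a \<le> 2 powr a * (x powr a + y powr a)"
proof -
  have "(x + y) powr a \<le> (2 * max x y) powr a" using assms by (intro powr_mono2) auto
  also have "\<dots> = 2 powr a * max x y powr a" using assms by (simp add: powr_mult)
  also have "max x y powr a \<le> x powr a + y powr a" by (cases "x \<le> y") (auto simp: max_def)
  hence "2 powr a * max x y powr a \<le> 2 powr a * (x powr a + y powr a)" by (intro mult_left_mono) auto
  finally show ?thesis .
qed

lemma powr_helper: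
  fixes x z a :: real
  assumes "0 < x" "0 < z"
  shows "(x / z) powr (1-a) * x powr a = x * z powr (a-1)"
proof -
  have e: "z powr (a-1) = inverse (z powr (1-a))" using powr_minus[of z "1-a"] by simp
  have "(x / z) powr (1-a) = x powr (1-a) / z powr (1-a)"
    using assms by (simp add: powr_divide)
  also have "\<dots> = x powr (1-a) * z powr (a-1)" by (simp add: e divide_inverse)
  finally have 1: "(x / z) powr (1-a) = x powr (1-a) * z powr (a-1)" .
  have "x powr (1-a) * x powr a = x"
    using assms by (simp add: powr_add[symmetric])
  with 1 show ?thesis by (simp add: algebra_simps)
qed

context prob_space
begin

lemma powr_add_integrable:
  fixes X Y :: "'a \<Rightarrow> real"
  assumes a: "0 < a"
    and X: "X \<in> borel_measurable M" "AE w in M. 0 \<le> X w" "integrable M (\<lambda>w. X w powr a)"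
    and Y: "Y \<in> borel_measurable M" "AE w in M. 0 \<le> Y w" "integrable M (\<lambda>w. Y w powr a)"
  shows "integrable M (\<lambda>w. (X w + Y w) powr a)"
proof (rule Bochner_Integration.integrable_bound[where f="\<lambda>w. 2 powr a * (X w powr a + Y w powr a)"])
  show "integrable M (\<lambda>w. 2 powr a * (X w powr a + Y w powr a))" using X Y by auto
  show "(\<lambda>w. (X w + Y w) powr a) \<in> borel_measurable M" using X Y by measurable
  show "AE w in M. norm ((X w + Y w) powr a) \<le> norm (2 powr a * (X w powr a + Y w powr a))"
    using X(2) Y(2) proof eventually_elim
    case (elim w)
    then show ?case using powr_add_bound2[OF elim a] by auto
  qed
qed

lemma powr_add_integral:
  fixes X Y :: "'a \<Rightarrow> real"
  assumes a: "0 < a"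
    and X: "X \<in> borel_measurable M" "AE w in M. 0 \<le> X w" "integrable M (\<lambda>w. X w powr a)"
    and Y: "Y \<in> borel_measurable M" "AE w in M. 0 \<le> Y w" "integrable M (\<lambda>w. Y w powr a)"
  shows "(\<integral>w. (X w + Y w) powr a \<partial>M) powr (1 / max 1 a) \<le>
           (\<integral>w. X w powr a \<partial>M) powr (1 / max 1 a) + (\<integral>w. Y w powr a \<partial>M) powr (1 / max 1 a)"
proof -
  have iXY: "integrable M (\<lambda>w. (X w + Y w) powr a)" by (rule powr_add_integrable[OF a X Y])
  define IX where "IX = (\<integral>w. X w powr a \<partial>M)"
  define IY where "IY = (\<integral>w. Y w powr a \<partial>M)"
  define IS where "IS = (\<integral>w. (X w + Y w) powr a \<partial>M)"
  have IX0: "0 \<le> IX" "0 \<le> IY" "0 \<le> IS" unfolding IX_def IY_def IS_def by auto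
  show ?thesis
  proof (cases "a \<le> 1")
    case True
    have "IS \<le> IX + IY" unfolding IS_def IX_def IY_def
    proof -
      have "(\<integral>w. (X w + Y w) powr a \<partial>M) \<le> (\<integral>w. X w powr a + Y w powr a \<partial>M)"
        using iXY X Y
      proof (intro integral_mono_AE)
        show "AE w in M. (X w + Y w) powr a \<le> X w powr a + Y w powr a"
          using X(2) Y(2) by eventually_elim (rule subadd_powr, use a True in auto)
      qed auto
      also have "\<dots> = (\<integral>w. X w powr a \<partial>M) + (\<integral>w. Y w powr a \<partial>M)"
        by (rule Bochner_Integration.integral_add[OF X(3) Y(3)])
      finally show "(\<integral>w. (X w + Y w) powr a \<partial>M) \<le> (\<integral>w. X w powr a \<partial>M) + (\<integral>w. Y w powr a \<partial>M)" .
    qed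
    then show ?thesis using True IX0 by (simp add: max_def IS_def[symmetric] IX_def[symmetric] IY_def[symmetric])
  next
    case False
    hence a1: "1 < a" by simp
    hence mx: "max 1 a = a" by simp
    show ?thesis
    proof (cases "IX = 0 \<or> IY = 0")
      case True
      then show ?thesis
      proof
        assume "IX = 0"
        hence "AE w in M. X w powr a = 0" using X unfolding IX_def
          by (subst integral_nonneg_eq_0_iff_AE[symmetric]) auto
        hence "AE w in M. (X w + Y w) powr a = Y w powr a" by eventually_elim auto
        hence "IS = IY" unfolding IS_def IY_def using X Y by (intro integral_cong_AE) auto
        then show ?thesis using \<open>IX = 0\<close> by (simp add: IS_def[symmetric] IX_def[symmetric] IY_def[symmetric])
      next
        assume "IY = 0"
        hence "AE w in M. Y w powr a = 0" using Y unfolding IY_def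
          by (subst integral_nonneg_eq_0_iff_AE[symmetric]) auto
        hence "AE w in M. (X w + Y w) powr a = X w powr a" by eventually_elim auto
        hence "IS = IX" unfolding IS_def IX_def using X Y by (intro integral_cong_AE) auto
        then show ?thesis using \<open>IY = 0\<close> by (simp add: IS_def[symmetric] IX_def[symmetric] IY_def[symmetric])
      qed
    next
      case False
      hence pos: "0 < IX" "0 < IY" using IX0 by auto
      define x where "x = IX powr (1/a)"
      define y where "y = IY powr (1/a)"
      have xy: "0 < x" "0 < y" unfolding x_def y_def using pos by auto
      have xa: "x powr a = IX" "y powr a = IY" unfolding x_def y_def using pos a
        by (simp_all add: powr_powr)
      define l where "l = x / (x + y)"
      have l: "0 < l" "l < 1" unfolding l_def using xy by auto
      have "IS \<le> (\<integral>w. l powr (1-a) * X w powr a + (1-l) powr (1-a) * Y w powr a \<partial>M)"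
        unfolding IS_def
      proof (intro integral_mono_AE)
        show "integrable M (\<lambda>w. l powr (1-a) * X w powr a + (1-l) powr (1-a) * Y w powr a)"
          using X Y by auto
        show "AE w in M. (X w + Y w) powr a \<le> l powr (1-a) * X w powr a + (1-l) powr (1-a) * Y w powr a"
          using X(2) Y(2) by eventually_elim (rule convex_powr_ineq, use a1 l in auto)
      qed (rule iXY)
      also have "\<dots> = l powr (1-a) * IX + (1-l) powr (1-a) * IY"
        unfolding IX_def IY_def using X Y by simp
      also have "\<dots> = (x + y) powr a"
      proof -
        have 1: "1 - l = y / (x + y)" unfolding l_def using xy by (simp add: field_simps)
        have "l powr (1-a) * IX = x * (x+y) powr (a - 1)"
          unfolding l_def xa[symmetric] using xy by (intro powr_helper) auto
        moreover have "(1-l) powr (1-a) * IY = y * (x+y) powr (a - 1)"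
          unfolding 1 xa[symmetric] using xy by (intro powr_helper) auto
        moreover have "x * (x+y) powr (a - 1) + y * (x+y) powr (a - 1) = (x + y) powr a"
        proof -
          have "x * (x+y) powr (a - 1) + y * (x+y) powr (a - 1) = (x+y) powr 1 * (x+y) powr (a - 1)"
            using xy by (simp add: algebra_simps)
          also have "\<dots> = (x + y) powr a" using powr_add[of "x+y" 1 "a-1"] by simp
          finally show ?thesis .
        qed
        ultimately show ?thesis by simp
      qed
      finally have "IS \<le> (x + y) powr a" .
      hence "IS powr (1/a) \<le> ((x + y) powr a) powr (1/a)"
        using IX0 a by (intro powr_mono2) auto
      also have "\<dots> = x + y" using xy a by (simp add: powr_powr)
      finally show ?thesis unfolding mx using x_def y_def IS_def IX_def IY_def by simp
    qed
  qed
qed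


lemma powr_sum_integral:
  fixes X :: "'b \<Rightarrow> 'a \<Rightarrow> real"
  assumes a: "0 < a" and K: "finite K"
    and m: "\<And>k. k \<in> K \<Longrightarrow> X k \<in> borel_measurable M"
    and nn: "\<And>k. k \<in> K \<Longrightarrow> AE w in M. 0 \<le> X k w"
    and int: "\<And>k. k \<in> K \<Longrightarrow> integrable M (\<lambda>w. X k w powr a)"
  shows "integrable M (\<lambda>w. (\<Sum>k\<in>K. X k w) powr a) \<and>
    (\<integral>w. (\<Sum>k\<in>K. X k w) powr a \<partial>M) powr (1 / max 1 a) \<le> (\<Sum>k\<in>K. (\<integral>w. X k w powr a \<partial>M) powr (1 / max 1 a))"
  using K m nn int
proof (induction K rule: finite_induct)
  case empty then show ?case by simp
next
  case (insert k K)
  have IH: "integrable M (\<lambda>w. (\<Sum>k\<in>K. X k w) powr a) \<and>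
    (\<integral>w. (\<Sum>k\<in>K. X k w) powr a \<partial>M) powr (1 / max 1 a) \<le> (\<Sum>k\<in>K. (\<integral>w. X k w powr a \<partial>M) powr (1 / max 1 a))"
    by (rule insert.IH) (use insert.prems in auto)
  have mS: "(\<lambda>w. \<Sum>k\<in>K. X k w) \<in> borel_measurable M"
    using insert.prems by (intro borel_measurable_sum) auto
  have "AE w in M. \<forall>k'\<in>K. 0 \<le> X k' w"
    by (rule AE_finite_allI[OF insert.hyps(1)]) (use insert.prems in auto)
  hence nS: "AE w in M. 0 \<le> (\<Sum>k\<in>K. X k w)" by eventually_elim (auto intro: sum_nonneg)
  have eq: "\<And>w. (\<Sum>k\<in>insert k K. X k w) = X k w + (\<Sum>k\<in>K. X k w)"
    using insert.hyps by simp
  have mk: "X k \<in> borel_measurable M" "AE w in M. 0 \<le> X k w" "integrable M (\<lambda>w. X k w powr a)"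
    using insert.prems by auto
  have i: "integrable M (\<lambda>w. (\<Sum>k\<in>insert k K. X k w) powr a)"
    unfolding eq by (rule powr_add_integrable[OF a mk mS nS conjunct1[OF IH]])
  have "(\<integral>w. (\<Sum>k\<in>insert k K. X k w) powr a \<partial>M) powr (1 / max 1 a)
      \<le> (\<integral>w. X k w powr a \<partial>M) powr (1 / max 1 a) + (\<integral>w. (\<Sum>k\<in>K. X k w) powr a \<partial>M) powr (1 / max 1 a)"
    unfolding eq by (rule powr_add_integral[OF a mk mS nS conjunct1[OF IH]])
  also have "\<dots> \<le> (\<integral>w. X k w powr a \<partial>M) powr (1 / max 1 a) + (\<Sum>k\<in>K. (\<integral>w. X k w powr a \<partial>M) powr (1 / max 1 a))"
    using IH by simp
  finally show ?case using i insert.hyps by simp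
qed

lemma indep_powr_integral:
  fixes X Y :: "'a \<Rightarrow> real"
  assumes ind: "indep_var borel X borel Y" and a: "0 < a"
    and X: "X \<in> borel_measurable M" "AE w in M. 0 \<le> X w" "integrable M (\<lambda>w. X w powr a)"
    and Y: "Y \<in> borel_measurable M" "AE w in M. 0 \<le> Y w" "integrable M (\<lambda>w. Y w powr a)"
  shows "integrable M (\<lambda>w. (X w * Y w) powr a)"
    and "(\<integral>w. (X w * Y w) powr a \<partial>M) = (\<integral>w. X w powr a \<partial>M) * (\<integral>w. Y w powr a \<partial>M)"
proof -
  have ind2: "indep_var borel ((\<lambda>x. x powr a) \<circ> X) borel ((\<lambda>x. x powr a) \<circ> Y)"
    by (rule indep_var_compose[OF ind]) auto
  hence ind3: "indep_var borel (\<lambda>w. X w powr a) borel (\<lambda>w. Y w powr a)" by (simp add: comp_def)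
  have ae: "AE w in M. (X w * Y w) powr a = X w powr a * Y w powr a"
    using X(2) Y(2) by eventually_elim (simp add: powr_mult)
  have "integrable M (\<lambda>w. X w powr a * Y w powr a)"
    by (rule indep_var_integrable[OF ind3 X(3) Y(3)])
  then show "integrable M (\<lambda>w. (X w * Y w) powr a)"
    using ae X Y by (subst integrable_cong_AE[where g="\<lambda>w. X w powr a * Y w powr a"]) auto
  have "(\<integral>w. (X w * Y w) powr a \<partial>M) = (\<integral>w. X w powr a * Y w powr a \<partial>M)"
    using ae X Y by (intro integral_cong_AE) auto
  also have "\<dots> = (\<integral>w. X w powr a \<partial>M) * (\<integral>w. Y w powr a \<partial>M)"
    by (rule indep_var_lebesgue_integral[OF ind3 X(3) Y(3)])
  finally show "(\<integral>w. (X w * Y w) powr a \<partial>M) = (\<integral>w. X w powr a \<partial>M) * (\<integral>w. Y w powr a \<partial>M)" .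
qed

end



lemma powr_le_1_plus:
  fixes x b c :: real
  assumes "0 \<le> b" "b \<le> c"
  shows "x powr b \<le> 1 + x powr c"
proof (cases "x = 0")
  case True then show ?thesis by simp
next
  case False
  show ?thesis
  proof (cases "0 \<le> ln x")
    case True
    hence "b * ln x \<le> c * ln x" using assms by (intro mult_right_mono) auto
    hence "exp (b * ln x) \<le> exp (c * ln x)" by simp
    hence "exp (b * ln x) \<le> 1 + exp (c * ln x)" by (smt (verit) exp_gt_zero)
    then show ?thesis using False by (simp add: powr_def)
  next
    case f2: False
    hence "b * ln x \<le> 0" using assms by (simp add: mult_nonneg_nonpos)
    hence "exp (b * ln x) \<le> 1" by simp
    then show ?thesis using False by (simp add: powr_def add_increasing2)
  qed
qed

lemma coord_meas:
  assumes "k \<in> {1..d}" "l \<in> {1..d}"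
  shows "(\<lambda>x. fst x (k, l)) \<in> borel_measurable (MAB d)"
  unfolding MAB_def
  by (rule measurable_compose[OF measurable_fst measurable_component_singleton]) (use assms in auto)

lemma coord_sets:
  assumes "k \<in> {1..d}" "l \<in> {1..d}" "S \<in> sets borel"
  shows "{x \<in> space (MAB d). fst x (k, l) \<in> S} \<in> sets (MAB d)"
proof -
  have "{x \<in> space (MAB d). fst x (k, l) \<in> S} = (\<lambda>x. fst x (k, l)) -` S \<inter> space (MAB d)" by auto
  also have "\<dots> \<in> sets (MAB d)" by (rule measurable_sets[OF coord_meas[OF assms(1,2)] assms(3)])
  finally show ?thesis .
qed

fun phiM :: "nat \<Rightarrow> nat \<Rightarrow> (int \<Rightarrow> (nat \<times> nat \<Rightarrow> real) \<times> (nat \<Rightarrow> real)) \<Rightarrow> nat \<Rightarrow> nat \<Rightarrow> real" where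
  "phiM d 0 x = (\<lambda>i j. if i = j then 1 else 0)"
| "phiM d (Suc s) x = (\<lambda>i j. \<Sum>k\<in>{1..d}. phiM d s x i k * fst (x (- int s)) (k, j))"

lemma phi_meas:
  assumes "{- int s<..0} \<subseteq> J" "j \<in> {1..d}"
  shows "(\<lambda>x. phiM d s x i j) \<in> borel_measurable (PiM J (\<lambda>_. MAB d))"
  using assms
proof (induction s arbitrary: j)
  case 0 then show ?case by simp
next
  case (Suc s)
  have J: "{- int s<..0} \<subseteq> J" "- int s \<in> J" using Suc.prems by auto
  have c: "(\<lambda>x. fst (x (- int s)) (k, j)) \<in> borel_measurable (PiM J (\<lambda>_. MAB d))" if "k \<in> {1..d}" for k
    by (rule measurable_compose[OF measurable_component_singleton[OF J(2)] coord_meas[OF that Suc.prems(2)]])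
  have eq: "(\<lambda>x. phiM d (Suc s) x i j) = (\<lambda>x. \<Sum>k\<in>{1..d}. phiM d s x i k * fst (x (- int s)) (k, j))"
    by simp
  show ?case unfolding eq
  proof (rule borel_measurable_sum)
    fix k assume "k \<in> {1..d}"
    then show "(\<lambda>x. phiM d s x i k * fst (x (- int s)) (k, j)) \<in> borel_measurable (PiM J (\<lambda>_. MAB d))"
      by (intro borel_measurable_times Suc.IH[OF J(1)] c)
  qed
qed

lemma phi_eq:
  assumes "{- int s<..0} \<subseteq> J" "j \<in> {1..d}"
  shows "piM d A s w i j = phiM d s (\<lambda>t\<in>J. obsAB d A B t w) i j"
  using assms
proof (induction s arbitrary: j)
  case 0 then show ?case by simp
next
  case (Suc s)
  have J: "{- int s<..0} \<subseteq> J" "- int s \<in> J" using Suc.prems by auto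
  show ?case using Suc.IH[OF J(1)] J(2) Suc.prems(2)
    by (simp add: obsAB_def)
qed

locale L5 =
  fixes M :: "'a measure" and d :: nat
    and A :: "int \<Rightarrow> 'a \<Rightarrow> nat \<Rightarrow> nat \<Rightarrow> real" and B :: "int \<Rightarrow> 'a \<Rightarrow> nat \<Rightarrow> real"
    and \<alpha> :: "nat \<Rightarrow> real" and i j0 :: nat
  assumes PS: "prob_space M"
    and iid: "iid_AB M d A B"
    and CT: "condition_T M d A B \<alpha>"
    and i_in: "i \<in> {1..d}" and j0_in: "j0 \<in> {1..d}"
    and ij0: "trlt M d A i j0"
    and alpha_i: "\<alpha> i > alpha_tilde M d A \<alpha> i"
    and alpha_t: "alpha_tilde M d A \<alpha> i = \<alpha> j0"
begin

sublocale prob_space M by (rule PS)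

abbreviation "obs \<equiv> obsAB d A B"

lemma indep_obs: "indep_vars (\<lambda>_. MAB d) obs UNIV"
  using iid unfolding iid_AB_def by auto

lemma obs_meas: "obs t \<in> measurable M (MAB d)"
  using indep_obs unfolding indep_vars_def by auto

lemma distr_eq: "distr M (MAB d) (obs t) = distr M (MAB d) (obs 0)"
  using iid unfolding iid_AB_def by auto

lemma obs_A: "k \<in> {1..d} \<Longrightarrow> l \<in> {1..d} \<Longrightarrow> fst (obs t w) (k, l) = A t w k l"
  by (simp add: obsAB_def)

lemma A_meas: "k \<in> {1..d} \<Longrightarrow> l \<in> {1..d} \<Longrightarrow> (\<lambda>w. A t w k l) \<in> borel_measurable M"
  using measurable_compose[OF obs_meas coord_meas, of k l t] by (simp add: obs_A)

lemma integral_transfer: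
  fixes g :: "_ \<Rightarrow> real"
  assumes "g \<in> borel_measurable (MAB d)"
  shows "(\<integral>w. g (obs t w) \<partial>M) = (\<integral>w. g (obs 0 w) \<partial>M)"
  unfolding integral_distr[OF obs_meas assms, symmetric] distr_eq[of t] ..

lemma integrable_transfer:
  fixes g :: "_ \<Rightarrow> real"
  assumes "g \<in> borel_measurable (MAB d)"
  shows "integrable M (\<lambda>w. g (obs t w)) \<longleftrightarrow> integrable M (\<lambda>w. g (obs 0 w))"
  unfolding integrable_distr_eq[OF obs_meas assms, symmetric] distr_eq[of t] ..

lemma AE_transfer:
  assumes "{x \<in> space (MAB d). P x} \<in> sets (MAB d)"
  shows "(AE w in M. P (obs t w)) \<longleftrightarrow> (AE w in M. P (obs 0 w))"
  unfolding AE_distr_iff[OF obs_meas assms, symmetric] distr_eq[of t] ..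

lemma A_nonneg:
  assumes "k \<in> {1..d}" "l \<in> {1..d}"
  shows "AE w in M. 0 \<le> A t w k l"
proof -
  have "AE w in M. 0 \<le> A 0 w k l"
    using CT assms unfolding condition_T_def by (auto elim: AE_mp)
  hence "AE w in M. fst (obs 0 w) (k, l) \<in> {0..}" using assms by (simp add: obs_A)
  hence "AE w in M. fst (obs t w) (k, l) \<in> {0..}"
    by (subst AE_transfer) (rule coord_sets, use assms in auto)
  then show ?thesis using assms by (simp add: obs_A)
qed

lemma A_zero:
  assumes "k \<in> {1..d}" "l \<in> {1..d}" "\<not> prec M d A k l"
  shows "AE w in M. A t w k l = 0"
proof -
  have s: "{w \<in> space M. 0 < A 0 w k l} \<in> sets M"
    using A_meas[OF assms(1,2), of 0] by measurable
  have "measure M {w \<in> space M. A 0 w k l > 0} \<le> 0" using assms unfolding prec_def by auto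
  hence "measure M {w \<in> space M. A 0 w k l > 0} = 0" using measure_nonneg[of M] by (meson order_antisym)
  hence "AE w in M. \<not> 0 < A 0 w k l" using prob_Collect_eq_0[OF s] by simp
  hence "AE w in M. fst (obs 0 w) (k, l) \<in> {..0}" using assms by (simp add: obs_A not_less)
  hence "AE w in M. fst (obs t w) (k, l) \<in> {..0}"
    by (subst AE_transfer) (rule coord_sets, use assms in auto)
  hence "AE w in M. A t w k l \<le> 0" using assms by (simp add: obs_A)
  with A_nonneg[OF assms(1,2), of t] show ?thesis by eventually_elim simp
qed

end



context L5
begin

lemma A_pow_int:
  assumes "k \<in> {1..d}" "l \<in> {1..d}" "0 \<le> b" "b \<le> \<alpha> k"
  shows "integrable M (\<lambda>w. A t w k l powr b)"
proof -
  have m: "(\<lambda>x. fst x (k, l) powr b) \<in> borel_measurable (MAB d)"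
    using coord_meas[OF assms(1,2)] by measurable
  have i0: "integrable M (\<lambda>w. A 0 w k l powr \<alpha> k)"
    using CT assms unfolding condition_T_def by auto
  have "integrable M (\<lambda>w. A 0 w k l powr b)"
  proof (rule Bochner_Integration.integrable_bound[where f="\<lambda>w. 1 + A 0 w k l powr \<alpha> k"])
    show "integrable M (\<lambda>w. 1 + A 0 w k l powr \<alpha> k)" using i0 by auto
    show "(\<lambda>w. A 0 w k l powr b) \<in> borel_measurable M" using A_meas[OF assms(1,2), of 0] by measurable
    show "AE w in M. norm (A 0 w k l powr b) \<le> norm (1 + A 0 w k l powr \<alpha> k)"
      using powr_le_1_plus[OF assms(3,4)] by (auto intro!: AE_I2)
  qed
  hence "integrable M (\<lambda>w. fst (obs 0 w) (k, l) powr b)" using assms by (simp add: obs_A)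
  hence "integrable M (\<lambda>w. fst (obs t w) (k, l) powr b)" using integrable_transfer[OF m] by simp
  then show ?thesis using assms by (simp add: obs_A)
qed

lemma A_pow_integral:
  assumes "k \<in> {1..d}" "l \<in> {1..d}"
  shows "(\<integral>w. A t w k l powr b \<partial>M) = (\<integral>w. A 0 w k l powr b \<partial>M)"
proof -
  have m: "(\<lambda>x. fst x (k, l) powr b) \<in> borel_measurable (MAB d)"
    using coord_meas[OF assms(1,2)] by measurable
  show ?thesis using integral_transfer[OF m, of t] assms by (simp add: obs_A)
qed

lemma prec_range: "prec M d A k l \<Longrightarrow> k \<in> {1..d} \<and> l \<in> {1..d}"
  unfolding prec_def by auto

lemma prec_le:
  assumes "prec M d A k l" shows "k \<le> l"
proof (rule ccontr)
  assume "\<not> k \<le> l"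
  hence kl: "k > l" by simp
  have r: "k \<in> {1..d}" "l \<in> {1..d}" using prec_range[OF assms] by auto
  have "measure M {w \<in> space M. A 0 w k l = 0} = 1" using CT r kl unfolding condition_T_def by auto
  moreover have s: "{w \<in> space M. A 0 w k l = 0} \<in> sets M" using A_meas[OF r, of 0] by measurable
  ultimately have "AE w in M. A 0 w k l = 0" using prob_Collect_eq_1[OF s] by simp
  hence "AE w in M. \<not> (0 < A 0 w k l)" by eventually_elim simp
  moreover have s2: "{w \<in> space M. 0 < A 0 w k l} \<in> sets M" using A_meas[OF r, of 0] by measurable
  ultimately have "measure M {w \<in> space M. 0 < A 0 w k l} = 0" using prob_Collect_eq_0[OF s2] by simp
  then show False using assms unfolding prec_def by simp
qed

lemma trle_le: "trle M d A k l \<Longrightarrow> k \<le> l"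
  unfolding trle_def
proof (induction rule: rtranclp_induct)
  case base then show ?case by simp
next
  case (step y z) then show ?case using prec_le[of y z] by linarith
qed

lemma trle_range: "trle M d A k l \<Longrightarrow> k \<in> {1..d} \<Longrightarrow> l \<in> {1..d}"
  unfolding trle_def
proof (induction rule: rtranclp_induct)
  case base then show ?case by simp
next
  case (step y z) then show ?case using prec_range[of y z] by blast
qed

lemma trle_trans: "trle M d A k l \<Longrightarrow> trle M d A l m \<Longrightarrow> trle M d A k m"
  unfolding trle_def by auto

lemma trle_step: "trle M d A k l \<Longrightarrow> prec M d A l m \<Longrightarrow> trle M d A k m"
  unfolding trle_def by auto

lemma prec_trle: "prec M d A k l \<Longrightarrow> trle M d A k l"
  unfolding trle_def by auto

lemma trle_refl: "trle M d A k k"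
  unfolding trle_def by auto

definition a where "a = \<alpha> j0"
definition p where "p = max 1 a"

lemma a_pos: "0 < a"
  using CT j0_in unfolding condition_T_def a_def by auto

lemma p_pos: "0 < p" "1 \<le> p" unfolding p_def by auto

lemma a_le:
  assumes "trle M d A i k" "k \<in> {1..d}"
  shows "a \<le> \<alpha> k"
proof -
  have "\<alpha> k \<in> \<alpha> ` {j \<in> {1..d}. trle M d A i j}" using assms by blast
  hence "alpha_tilde M d A \<alpha> i \<le> \<alpha> k"
    unfolding alpha_tilde_def by (intro Min_le) auto
  then show ?thesis using alpha_t unfolding a_def by simp
qed

lemma alpha_neq:
  assumes "k \<in> {1..d}" "k \<noteq> j0"
  shows "\<alpha> k \<noteq> a"
proof
  assume "\<alpha> k = a"
  moreover have "inj_on \<alpha> {1..d}" using CT unfolding condition_T_def by blast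
  ultimately have "k = j0" using assms j0_in unfolding a_def by (meson inj_onD)
  then show False using assms by simp
qed

definition good where
  "good w \<longleftrightarrow> (\<forall>t::int. \<forall>k\<in>{1..d}. \<forall>l\<in>{1..d}. 0 \<le> A t w k l \<and> (\<not> prec M d A k l \<longrightarrow> A t w k l = 0))"

lemma AE_good: "AE w in M. good w"
proof -
  have "AE w in M. \<forall>t::int. \<forall>k\<in>{1..d}. \<forall>l\<in>{1..d}. 0 \<le> A t w k l \<and> (\<not> prec M d A k l \<longrightarrow> A t w k l = 0)"
  proof (subst AE_all_countable, intro allI AE_finite_allI)
    fix t :: int and k l assume kl: "k \<in> {1..d}" "l \<in> {1..d}"
    show "AE w in M. 0 \<le> A t w k l \<and> (\<not> prec M d A k l \<longrightarrow> A t w k l = 0)"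
    proof (cases "prec M d A k l")
      case True then show ?thesis using A_nonneg[OF kl, of t] by simp
    next
      case False
      have "AE w in M. A t w k l = 0" by (rule A_zero[OF kl False])
      then show ?thesis by eventually_elim (simp add: False)
    qed
  qed auto
  then show ?thesis unfolding good_def .
qed

lemma pi_Suc: "piM d A (Suc s) w i' j = (\<Sum>k\<in>{1..d}. piM d A s w i' k * A (- int s) w k j)"
  by simp

lemma pi_good:
  assumes "good w" "k \<in> {1..d}"
  shows "0 \<le> piM d A s w i k \<and> (\<not> trle M d A i k \<longrightarrow> piM d A s w i k = 0)"
  using assms(2)
proof (induction s arbitrary: k)
  case 0 then show ?case using trle_refl by auto
next
  case (Suc s)
  have nn: "0 \<le> piM d A s w i m * A (- int s) w m k" if "m \<in> {1..d}" for m
    using Suc.IH[OF that] assms(1) that Suc.prems unfolding good_def by auto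
  have z: "piM d A s w i m * A (- int s) w m k = 0" if "m \<in> {1..d}" "\<not> trle M d A i k" for m
  proof (cases "trle M d A i m")
    case True
    hence "\<not> prec M d A m k" using that trle_step by blast
    then show ?thesis using assms(1) that Suc.prems unfolding good_def by auto
  next
    case False then show ?thesis using Suc.IH[OF that(1)] by auto
  qed
  have "0 \<le> piM d A (Suc s) w i k" unfolding pi_Suc by (rule sum_nonneg) (rule nn)
  moreover have "\<not> trle M d A i k \<longrightarrow> piM d A (Suc s) w i k = 0"
    unfolding pi_Suc using z by (intro impI sum.neutral) auto
  ultimately show ?case by blast
qed

definition T where "T j = {k \<in> {1..d}. trle M d A i k \<and> prec M d A k j}"

lemma T_sub: "T j \<subseteq> {1..d}" "finite (T j)" unfolding T_def by auto

lemma pi_rec: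
  assumes "good w" "j \<in> {1..d}"
  shows "piM d A (Suc s) w i j = (\<Sum>k\<in>T j. piM d A s w i k * A (- int s) w k j)"
  unfolding pi_Suc
proof (rule sum.mono_neutral_right)
  show "finite {1..d}" by simp
  show "T j \<subseteq> {1..d}" by (rule T_sub)
  show "\<forall>k\<in>{1..d} - T j. piM d A s w i k * A (- int s) w k j = 0"
  proof
    fix k assume k: "k \<in> {1..d} - T j"
    show "piM d A s w i k * A (- int s) w k j = 0"
    proof (cases "trle M d A i k")
      case True
      hence "\<not> prec M d A k j" using k unfolding T_def by auto
      then show ?thesis using assms k unfolding good_def by auto
    next
      case False then show ?thesis using pi_good[OF assms(1), of k s] k by auto
    qed
  qed
qed

lemma pi_lower:
  assumes "good w" "j \<in> {1..d}" "k \<in> {1..d}"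
  shows "piM d A s w i k * A (- int s) w k j \<le> piM d A (Suc s) w i j"
proof -
  have "\<And>m. m \<in> {1..d} - {k} \<Longrightarrow> 0 \<le> piM d A s w i m * A (- int s) w m j"
    using pi_good[OF assms(1)] assms unfolding good_def by auto
  then show ?thesis unfolding pi_Suc
    using member_le_sum[of k "{1..d}" "\<lambda>m. piM d A s w i m * A (- int s) w m j"] assms by auto
qed

lemma pi_meas: "j \<in> {1..d} \<Longrightarrow> (\<lambda>w. piM d A s w i j) \<in> borel_measurable M"
proof (induction s arbitrary: j)
  case 0 then show ?case by simp
next
  case (Suc s)
  show ?case unfolding pi_Suc
    by (rule borel_measurable_sum, rule borel_measurable_times) (use Suc A_meas in auto)
qed

lemma pi_nonneg:
  assumes "k \<in> {1..d}" shows "AE w in M. 0 \<le> piM d A s w i k"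
  using AE_good by eventually_elim (use pi_good assms in auto)

lemma indep_piA:
  assumes "k \<in> {1..d}" "j \<in> {1..d}"
  shows "indep_var borel (\<lambda>w. piM d A s w i k) borel (\<lambda>w. A (- int s) w k j)"
proof -
  define J where "J = {- int s<..0}"
  define K where "K = {- int s}"
  have ind: "indep_var (PiM J (\<lambda>_. MAB d)) (\<lambda>w. restrict (\<lambda>t. obs t w) J)
                       (PiM K (\<lambda>_. MAB d)) (\<lambda>w. restrict (\<lambda>t. obs t w) K)"
    by (rule indep_var_restrict[OF indep_obs]) (auto simp: J_def K_def)
  have m1: "(\<lambda>x. phiM d s x i k) \<in> borel_measurable (PiM J (\<lambda>_. MAB d))"
    by (rule phi_meas) (use assms in \<open>auto simp: J_def\<close>)
  have m2: "(\<lambda>x. fst (x (- int s)) (k, j)) \<in> borel_measurable (PiM K (\<lambda>_. MAB d))"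
    by (rule measurable_compose[OF measurable_component_singleton[of "- int s" K "\<lambda>_. MAB d"] coord_meas[OF assms]]) (simp add: K_def)
  have "indep_var borel ((\<lambda>x. phiM d s x i k) \<circ> (\<lambda>w. restrict (\<lambda>t. obs t w) J))
                   borel ((\<lambda>x. fst (x (- int s)) (k, j)) \<circ> (\<lambda>w. restrict (\<lambda>t. obs t w) K))"
    by (rule indep_var_compose[OF ind m1 m2])
  moreover have "((\<lambda>x. phiM d s x i k) \<circ> (\<lambda>w. restrict (\<lambda>t. obs t w) J)) = (\<lambda>w. piM d A s w i k)"
    using phi_eq[where A=A and B=B and d=d and s=s and J=J and j=k] assms unfolding J_def by (auto simp: fun_eq_iff)
  moreover have "((\<lambda>x. fst (x (- int s)) (k, j)) \<circ> (\<lambda>w. restrict (\<lambda>t. obs t w) K)) = (\<lambda>w. A (- int s) w k j)"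
    using assms unfolding K_def by (auto simp: fun_eq_iff obs_A)
  ultimately show ?thesis by simp
qed

end



context L5
begin

definition e where "e k s = (\<integral>w. piM d A s w i k powr a \<partial>M)"
definition c where "c k l = (\<integral>w. A 0 w k l powr a \<partial>M)"
definition g where "g k s = e k s powr (1 / p)"
definition gam where "gam k l = c k l powr (1 / p)"

lemma e_nonneg: "0 \<le> e k s" unfolding e_def by (rule Bochner_Integration.integral_nonneg) simp
lemma c_nonneg: "0 \<le> c k l" unfolding c_def by (rule Bochner_Integration.integral_nonneg) simp
lemma g_nonneg: "0 \<le> g k s" unfolding g_def by simp
lemma gam_nonneg: "0 \<le> gam k l" unfolding gam_def by simp

lemma int_A:
  assumes "k \<in> {1..d}" "trle M d A i k" "l \<in> {1..d}"
  shows "integrable M (\<lambda>w. A t w k l powr a)"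
  by (rule A_pow_int) (use assms a_pos a_le in auto)

lemma T_props: "k \<in> T j \<Longrightarrow> k \<in> {1..d} \<and> trle M d A i k \<and> prec M d A k j"
  unfolding T_def by auto

lemma rec_step:
  assumes IH: "\<And>k. k \<in> {1..d} \<Longrightarrow> integrable M (\<lambda>w. piM d A s w i k powr a)"
    and j: "j \<in> {1..d}"
  shows "integrable M (\<lambda>w. piM d A (Suc s) w i j powr a) \<and> g j (Suc s) \<le> (\<Sum>k\<in>T j. g k s * gam k j)"
proof -
  define X where "X k w = piM d A s w i k * A (- int s) w k j" for k w
  have mX: "X k \<in> borel_measurable M" if "k \<in> T j" for k
    unfolding X_def using T_props[OF that] j by (intro borel_measurable_times pi_meas A_meas) auto
  have nX: "AE w in M. 0 \<le> X k w" if "k \<in> T j" for k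
  proof -
    have k: "k \<in> {1..d}" using T_props[OF that] by auto
    show ?thesis using pi_nonneg[OF k, of s] A_nonneg[OF k j, of "- int s"]
      by eventually_elim (simp add: X_def)
  qed
  have iX: "integrable M (\<lambda>w. X k w powr a)" and vX: "(\<integral>w. X k w powr a \<partial>M) = e k s * c k j"
    if "k \<in> T j" for k
  proof -
    have k: "k \<in> {1..d}" "trle M d A i k" using T_props[OF that] by auto
    note ip = indep_powr_integral[OF indep_piA[OF k(1) j] a_pos pi_meas[OF k(1)] pi_nonneg[OF k(1)] IH[OF k(1)]
      A_meas[OF k(1) j] A_nonneg[OF k(1) j] int_A[OF k j]]
    show "integrable M (\<lambda>w. X k w powr a)" unfolding X_def by (rule ip(1))
    show "(\<integral>w. X k w powr a \<partial>M) = e k s * c k j" unfolding X_def ip(2) e_def c_def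
      using A_pow_integral[OF k(1) j] by simp
  qed
  have ps: "integrable M (\<lambda>w. (\<Sum>k\<in>T j. X k w) powr a) \<and>
    (\<integral>w. (\<Sum>k\<in>T j. X k w) powr a \<partial>M) powr (1 / max 1 a) \<le> (\<Sum>k\<in>T j. (\<integral>w. X k w powr a \<partial>M) powr (1 / max 1 a))"
    by (rule powr_sum_integral[OF a_pos T_sub(2) mX nX iX])
  have ae: "AE w in M. piM d A (Suc s) w i j powr a = (\<Sum>k\<in>T j. X k w) powr a"
    using AE_good
  proof eventually_elim
    case (elim w) show ?case unfolding pi_rec[OF elim j] X_def ..
  qed
  have m1: "(\<lambda>w. piM d A (Suc s) w i j powr a) \<in> borel_measurable M" using pi_meas[OF j] by measurable
  have msum[measurable]: "(\<lambda>w. \<Sum>k\<in>T j. X k w) \<in> borel_measurable M"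
    by (rule borel_measurable_sum) (rule mX)
  have m2: "(\<lambda>w. (\<Sum>k\<in>T j. X k w) powr a) \<in> borel_measurable M"
    by measurable
  have i1: "integrable M (\<lambda>w. piM d A (Suc s) w i j powr a)"
    using integrable_cong_AE[OF m1 m2 ae] ps by simp
  have eq: "e j (Suc s) = (\<integral>w. (\<Sum>k\<in>T j. X k w) powr a \<partial>M)"
    unfolding e_def by (rule integral_cong_AE[OF m1 m2 ae])
  have "g j (Suc s) \<le> (\<Sum>k\<in>T j. (\<integral>w. X k w powr a \<partial>M) powr (1 / p))"
    using ps unfolding g_def eq p_def by simp
  also have "\<dots> = (\<Sum>k\<in>T j. g k s * gam k j)"
    by (intro sum.cong refl) (simp add: vX g_def gam_def powr_mult e_nonneg c_nonneg)
  finally show ?thesis using i1 by simp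
qed

lemma int_pi: "j \<in> {1..d} \<Longrightarrow> integrable M (\<lambda>w. piM d A s w i j powr a)"
proof (induction s arbitrary: j)
  case 0 then show ?case by simp
next
  case (Suc s) then show ?case using rec_step[of s j] by blast
qed

lemma rec_ineq: "j \<in> {1..d} \<Longrightarrow> g j (Suc s) \<le> (\<Sum>k\<in>T j. g k s * gam k j)"
  using rec_step[of s j] int_pi by blast

lemma lower:
  assumes k: "k \<in> {1..d}" "trle M d A i k" and j: "j \<in> {1..d}"
  shows "e k s * c k j \<le> e j (Suc s)"
proof -
  note ip = indep_powr_integral[OF indep_piA[OF k(1) j] a_pos pi_meas[OF k(1)] pi_nonneg[OF k(1)] int_pi[OF k(1)]
      A_meas[OF k(1) j] A_nonneg[OF k(1) j] int_A[OF k j]]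
  have "e k s * c k j = (\<integral>w. (piM d A s w i k * A (- int s) w k j) powr a \<partial>M)"
    unfolding ip(2) e_def c_def using A_pow_integral[OF k(1) j, of "- int s" a] by simp
  also have "\<dots> \<le> e j (Suc s)" unfolding e_def
  proof (rule integral_mono_AE[OF ip(1) int_pi[OF j]])
    show "AE w in M. (piM d A s w i k * A (- int s) w k j) powr a \<le> piM d A (Suc s) w i j powr a"
      using AE_good
    proof eventually_elim
      case (elim w)
      have "0 \<le> piM d A s w i k * A (- int s) w k j"
        using pi_good[OF elim k(1)] elim k j unfolding good_def by auto
      then show ?case using pi_lower[OF elim j k(1)] a_pos by (intro powr_mono2) auto
    qed
  qed
  finally show ?thesis .
qed

lemma c_pos:
  assumes "prec M d A k j" "trle M d A i k"
  shows "0 < c k j"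
proof (rule ccontr)
  assume "\<not> 0 < c k j"
  hence c0: "c k j = 0" using c_nonneg[of k j] by simp
  have r: "k \<in> {1..d}" "j \<in> {1..d}" using prec_range[OF assms(1)] by auto
  have "AE w in M. A 0 w k j powr a = 0"
    using c0 int_A[OF r(1) assms(2) r(2), of 0] unfolding c_def
    by (subst integral_nonneg_eq_0_iff_AE[symmetric]) auto
  hence "AE w in M. \<not> 0 < A 0 w k j" by eventually_elim simp
  moreover have s2: "{w \<in> space M. 0 < A 0 w k j} \<in> sets M" using A_meas[OF r, of 0] by measurable
  ultimately have "measure M {w \<in> space M. 0 < A 0 w k j} = 0" using prob_Collect_eq_0[OF s2] by simp
  then show False using assms unfolding prec_def by simp
qed

lemma e_pos: "trle M d A i j \<Longrightarrow> \<exists>s. 0 < e j s"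
  unfolding trle_def
proof (induction rule: rtranclp_induct)
  case base
  have "e i 0 = 1" unfolding e_def by (simp add: prob_space)
  then show ?case by (intro exI[of _ 0]) simp
next
  case (step y z)
  then obtain s where s: "0 < e y s" by auto
  have y: "y \<in> {1..d}" "z \<in> {1..d}" using prec_range[OF step(2)] by auto
  have ty: "trle M d A i y" using step(1) unfolding trle_def .
  have "0 < e y s * c y z" using s c_pos[OF step(2) ty] by simp
  also have "\<dots> \<le> e z (Suc s)" by (rule lower[OF y(1) ty y(2)])
  finally show ?case by blast
qed

lemma c_j0: "c j0 j0 = 1"
  using CT j0_in unfolding condition_T_def c_def a_def by auto

end



context L5
begin

lemma c_lt1:
  assumes k: "k \<in> {1..d}" "trle M d A i k" "k \<noteq> j0"
  shows "c k k < 1"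
proof -
  have ak: "a < \<alpha> k" using a_le[OF k(2,1)] alpha_neq[OF k(1,3)] by simp
  define q where "q = a / \<alpha> k"
  have q: "0 < q" "q < 1" unfolding q_def using ak a_pos by auto
  define X where "X w = A 0 w k k powr \<alpha> k" for w
  have X0: "0 \<le> X w" for w unfolding X_def by simp
  have iX: "integrable M X" and EX: "(\<integral>w. X w \<partial>M) = 1"
    using CT k(1) unfolding condition_T_def X_def by auto
  have Xq: "A 0 w k k powr a = X w powr q" for w
    unfolding X_def q_def using ak a_pos by (simp add: powr_powr)
  have iXq: "integrable M (\<lambda>w. X w powr q)"
    using int_A[OF k(1,2) k(1), of 0] by (simp add: Xq)
  have cq: "c k k = (\<integral>w. X w powr q \<partial>M)" unfolding c_def by (simp add: Xq)
  define h where "h w = q * X w + (1 - q) - X w powr q" for w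
  have h0: "0 \<le> h w" for w unfolding h_def using tangent_powr[OF q X0[of w]] by simp
  have ih: "integrable M h" unfolding h_def using iX iXq by auto
  have Eh: "(\<integral>w. h w \<partial>M) = 1 - c k k"
    unfolding h_def cq using iX iXq EX by (simp add: prob_space)
  have "0 \<le> (\<integral>w. h w \<partial>M)" using h0 by (simp add: Bochner_Integration.integral_nonneg)
  hence le: "c k k \<le> 1" using Eh by simp
  show ?thesis
  proof (rule ccontr)
    assume "\<not> c k k < 1"
    hence "c k k = 1" using le by simp
    hence "(\<integral>w. h w \<partial>M) = 0" using Eh by simp
    hence "AE w in M. h w = 0" using ih h0 by (subst integral_nonneg_eq_0_iff_AE[symmetric]) auto
    hence aeX: "AE w in M. X w = 1"
    proof eventually_elim
      case (elim w)
      show ?case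
      proof (rule ccontr)
        assume "X w \<noteq> 1"
        from tangent_powr_strict[OF q X0[of w] this] have "0 < h w" unfolding h_def by simp
        then show False using elim by simp
      qed
    qed
    have aeA: "AE w in M. A 0 w k k = 1" using aeX A_nonneg[OF k(1) k(1), of 0]
    proof eventually_elim
      case (elim w)
      have ne: "A 0 w k k \<noteq> 0" using elim(1) unfolding X_def by auto
      hence pos: "0 < A 0 w k k" using elim(2) by simp
      have "A 0 w k k = (A 0 w k k powr \<alpha> k) powr (1 / \<alpha> k)" using pos ak a_pos by (simp add: powr_powr)
      also have "\<dots> = 1" using elim(1) unfolding X_def by simp
      finally show ?case .
    qed
    have na: "non_arithmetic_given M (\<lambda>w. ln (A 0 w k k)) (\<lambda>w. A 0 w k k > 0)"
      using CT k(1) unfolding condition_T_def by auto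
    hence lt: "measure M {w \<in> space M. A 0 w k k > 0 \<and> (\<exists>z::int. ln (A 0 w k k) = 1 * of_int z)}
              < measure M {w \<in> space M. A 0 w k k > 0}"
      unfolding non_arithmetic_given_def by (meson zero_less_one)
    have mA[measurable]: "(\<lambda>w. A 0 w k k) \<in> borel_measurable M" using A_meas[OF k(1) k(1)] .
    have s1: "{w \<in> space M. A 0 w k k > 0 \<and> (\<exists>z::int. ln (A 0 w k k) = 1 * of_int z)} \<in> sets M"
      by measurable
    have s0: "{w \<in> space M. A 0 w k k > 0} \<in> sets M" by measurable
    have "AE w in M. A 0 w k k > 0 \<and> (\<exists>z::int. ln (A 0 w k k) = 1 * of_int z)"
      using aeA by eventually_elim (auto intro: exI[of _ 0])
    hence "measure M {w \<in> space M. A 0 w k k > 0 \<and> (\<exists>z::int. ln (A 0 w k k) = 1 * of_int z)} = 1"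
      using prob_Collect_eq_1[OF s1] by simp
    moreover have "measure M {w \<in> space M. A 0 w k k > 0} \<le> 1" by (rule prob_le_1)
    ultimately show False using lt by linarith
  qed
qed

end



context L5
begin

definition Sp where "Sp = {k \<in> {1..d}. trle M d A i k \<and> trle M d A k j0 \<and> k \<noteq> j0}"

lemma Sp_fin: "finite Sp" unfolding Sp_def by auto

lemma trle_ij0: "trle M d A i j0" using ij0 unfolding trlt_def by simp

lemma gam_lt1: "k \<in> Sp \<Longrightarrow> gam k k < 1"
proof -
  assume k: "k \<in> Sp"
  have "c k k < 1" using k unfolding Sp_def by (intro c_lt1) auto
  hence "c k k powr (1/p) < 1 powr (1/p)" using c_nonneg p_pos by (intro powr_less_mono2) auto
  then show ?thesis unfolding gam_def by simp
qed

lemma gam_j0: "gam j0 j0 = 1" unfolding gam_def c_j0 by simp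

lemma T_sub_S:
  assumes j: "j \<in> Sp \<or> j = j0" and k: "k \<in> T j" "k \<noteq> j"
  shows "k \<in> Sp \<and> k < j"
proof -
  have kk: "k \<in> {1..d}" "trle M d A i k" "prec M d A k j" using T_props[OF k(1)] by auto
  have lt: "k < j" using prec_le[OF kk(3)] k(2) by simp
  have jj0: "trle M d A j j0" using j trle_refl unfolding Sp_def by auto
  have "trle M d A k j0" using trle_trans[OF prec_trle[OF kk(3)] jj0] .
  moreover have "k \<noteq> j0" using lt trle_le[OF jj0] by auto
  ultimately show ?thesis using kk lt unfolding Sp_def by auto
qed

lemma step_bound:
  assumes j: "j \<in> Sp \<or> j = j0" and jd: "j \<in> {1..d}"
    and C: "0 \<le> C" "\<forall>k\<in>{k \<in> Sp. k < j}. \<forall>s. g k s \<le> C * q ^ s"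
  shows "g j (Suc s) \<le> gam j j * g j s + ((\<Sum>k\<in>{k \<in> Sp. k < j}. gam k j) * C) * q ^ s"
proof -
  define K where "K = {k \<in> Sp. k < j}"
  have fK: "finite K" unfolding K_def using Sp_fin by auto
  have jK: "j \<notin> K" unfolding K_def by auto
  have "g j (Suc s) \<le> (\<Sum>k\<in>T j. g k s * gam k j)" by (rule rec_ineq[OF jd])
  also have "\<dots> \<le> (\<Sum>k\<in>insert j K. g k s * gam k j)"
  proof (rule sum_mono2)
    show "finite (insert j K)" using fK by simp
    show "T j \<subseteq> insert j K" using T_sub_S[OF j] unfolding K_def by auto
    show "\<And>b. b \<in> insert j K - T j \<Longrightarrow> 0 \<le> g b s * gam b j" using g_nonneg gam_nonneg by simp
  qed
  also have "\<dots> = g j s * gam j j + (\<Sum>k\<in>K. g k s * gam k j)" using fK jK by simp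
  also have "(\<Sum>k\<in>K. g k s * gam k j) \<le> (\<Sum>k\<in>K. (C * q ^ s) * gam k j)"
    using C(2) gam_nonneg unfolding K_def by (intro sum_mono mult_right_mono) auto
  also have "\<dots> = (C * q ^ s) * (\<Sum>k\<in>K. gam k j)" by (rule sum_distrib_left[symmetric])
  also have "\<dots> = ((\<Sum>k\<in>K. gam k j) * C) * q ^ s" by (simp add: algebra_simps)
  finally show ?thesis unfolding K_def by (simp add: algebra_simps)
qed

lemma geo: "j \<in> Sp \<Longrightarrow> \<exists>C r. 0 \<le> r \<and> r < 1 \<and> (\<forall>s. g j s \<le> C * r ^ s)"
proof (induction j rule: less_induct)
  case (less j)
  have fK: "finite {k \<in> Sp. k < j}" using Sp_fin by auto
  obtain C q where C: "0 \<le> C" "0 \<le> q" "q < 1" "\<forall>k\<in>{k \<in> Sp. k < j}. \<forall>s. g k s \<le> C * q ^ s"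
    using finite_geom_bound[OF fK, of g] less.IH by auto
  have jd: "j \<in> {1..d}" using less.prems unfolding Sp_def by auto
  define D where "D = (\<Sum>k\<in>{k \<in> Sp. k < j}. gam k j) * C"
  have D: "0 \<le> D" unfolding D_def using C gam_nonneg by (intro mult_nonneg_nonneg sum_nonneg) auto
  show ?case
  proof (rule seq_geom_bound)
    show "g j (Suc s) \<le> gam j j * g j s + D * q ^ s" for s
      unfolding D_def by (rule step_bound) (use less.prems jd C in auto)
  qed (use gam_nonneg gam_lt1[OF less.prems] C D in auto)
qed

lemma bdd_j0: "\<exists>B. \<forall>s. g j0 s \<le> B"
proof -
  have fK: "finite {k \<in> Sp. k < j0}" using Sp_fin by auto
  obtain C q where C: "0 \<le> C" "0 \<le> q" "q < 1" "\<forall>k\<in>{k \<in> Sp. k < j0}. \<forall>s. g k s \<le> C * q ^ s"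
    using finite_geom_bound[OF fK, of g] geo by auto
  define D where "D = (\<Sum>k\<in>{k \<in> Sp. k < j0}. gam k j0) * C"
  have D: "0 \<le> D" unfolding D_def using C gam_nonneg by (intro mult_nonneg_nonneg sum_nonneg) auto
  have "g j0 s \<le> g j0 0 + D / (1 - q)" for s
  proof (rule seq_bdd_bound)
    show "g j0 (Suc s) \<le> g j0 s + D * q ^ s" for s
      using step_bound[of j0 C q s] j0_in C unfolding D_def gam_j0 by auto
  qed (use C D in auto)
  then show ?thesis by blast
qed

lemma e_g: "e k s = g k s powr p"
  unfolding g_def using e_nonneg[of k s] p_pos by (simp add: powr_powr)

theorem main:
  "\<exists>u. ((\<lambda>s. integral\<^sup>L M (\<lambda>w. piM d A s w i j0 powr \<alpha> j0)) \<longlonglongrightarrow> u) \<and> 0 < u \<and>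
           (\<forall>j. trle M d A i j \<and> trlt M d A j j0 \<longrightarrow>
              (\<exists>s_hat::nat. \<forall>s > s_hat. integral\<^sup>L M (\<lambda>w. piM d A s w i j powr \<alpha> j0) < u))"
proof -
  have eeq: "integral\<^sup>L M (\<lambda>w. piM d A s w i j powr \<alpha> j0) = e j s" for s j
    unfolding e_def a_def ..
  have inc: "incseq (e j0)"
  proof (rule incseq_SucI)
    fix s show "e j0 s \<le> e j0 (Suc s)" using lower[OF j0_in trle_ij0 j0_in, of s] c_j0 by simp
  qed
  obtain Bd where Bd: "\<forall>s. g j0 s \<le> Bd" using bdd_j0 by blast
  have bdd: "bdd_above (range (e j0))"
  proof (rule bdd_aboveI2)
    fix s show "e j0 s \<le> Bd powr p" unfolding e_g using Bd g_nonneg p_pos by (intro powr_mono2) auto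
  qed
  define u where "u = (SUP s. e j0 s)"
  have lim: "e j0 \<longlonglongrightarrow> u" unfolding u_def by (rule LIMSEQ_incseq_SUP[OF bdd inc])
  obtain s0 where s0: "0 < e j0 s0" using e_pos[OF trle_ij0] by blast
  have "e j0 s0 \<le> u" unfolding u_def by (rule cSUP_upper[OF _ bdd]) simp
  hence upos: "0 < u" using s0 by simp
  have rest: "\<exists>s_hat::nat. \<forall>s > s_hat. e j s < u" if j: "trle M d A i j" "trlt M d A j j0" for j
  proof -
    have jd: "j \<in> {1..d}" using trle_range[OF j(1) i_in] .
    have jS: "j \<in> Sp" using j jd unfolding Sp_def trlt_def by auto
    obtain C r where Cr: "0 \<le> r" "r < 1" "\<forall>s. g j s \<le> C * r ^ s" using geo[OF jS] by blast
    have "(\<lambda>s. C * r ^ s) \<longlonglongrightarrow> 0"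
      using Cr by (intro tendsto_mult_right_zero LIMSEQ_power_zero) auto
    moreover have "eventually (\<lambda>s. 0 \<le> g j s) sequentially" using g_nonneg by simp
    moreover have "eventually (\<lambda>s. g j s \<le> C * r ^ s) sequentially" using Cr by simp
    ultimately have g0: "g j \<longlonglongrightarrow> 0"
      using tendsto_sandwich[of "\<lambda>_. 0" "g j" sequentially "\<lambda>s. C * r ^ s" 0] by auto
    have "(\<lambda>s. g j s powr p) \<longlonglongrightarrow> 0"
      by (rule tendsto_zero_powrI[OF g0 tendsto_const]) (use g_nonneg p_pos in auto)
    hence "e j \<longlonglongrightarrow> 0" unfolding e_g .
    hence "eventually (\<lambda>s. e j s < u) sequentially" using upos by (rule order_tendstoD(2))
    then obtain N where "\<forall>s\<ge>N. e j s < u" unfolding eventually_sequentially by blast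
    then show ?thesis by (intro exI[of _ N]) auto
  qed
  show ?thesis unfolding eeq using lim upos rest by blast
qed

end



theorem lemma5p8:
  fixes M :: "'a measure" and d :: nat
    and A :: "int \<Rightarrow> 'a \<Rightarrow> nat \<Rightarrow> nat \<Rightarrow> real" and B :: "int \<Rightarrow> 'a \<Rightarrow> nat \<Rightarrow> real"
    and \<alpha> :: "nat \<Rightarrow> real" and i j0 :: nat
  assumes "prob_space M"
    and "iid_AB M d A B"
    and "condition_T M d A B \<alpha>"
    and "i \<in> {1..d}" and "j0 \<in> {1..d}"
    and "trlt M d A i j0"
    and "\<alpha> i > alpha_tilde M d A \<alpha> i"
    and "alpha_tilde M d A \<alpha> i = \<alpha> j0"
  shows "\<exists>u. ((\<lambda>s. integral\<^sup>L M (\<lambda>w. piM d A s w i j0 powr \<alpha> j0)) \<longlonglongrightarrow> u) \<and> 0 < u \<and>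
           (\<forall>j. trle M d A i j \<and> trlt M d A j j0 \<longrightarrow>
              (\<exists>s_hat::nat. \<forall>s > s_hat. integral\<^sup>L M (\<lambda>w. piM d A s w i j powr \<alpha> j0) < u))"
proof -
  interpret L5 M d A B \<alpha> i j0
    by (rule L5.intro) (rule assms)+
  show ?thesis by (rule main)
qed

end
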